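(* Let $p,q$ be integers with $p\ge2$ and $0<q<p$. Let $g(x)=(1-p^2x)^{-q/p}$, $h(x)=(1-p^2x)^{-(p-q)/p}$, and $f(x)=\dfrac{-x}{1-p^2x}$. Then the dual Riordan array satisfies $R^*(g,f)=R(h,f)$.
   Context: For power series $g$ and $f$ with $f(0)=0$, the Riordan array $R(g,f)$ is the infinite matrix with entries $R(g,f)_{n,k}=[x^n]\bigl(g(x)f(x)^k\bigr)$ for $n,k\ge0$. If moreover $f'(0)\ne0$, the recursive matrix $D(g,f)$ is the doubly infinite matrix with entries $D(g,f)_{n,k}=[x^n]\bigl(g(x)f(x)^k\bigr)$ for all integers $n,k$, where for $k<0$, $f(x)^k$ is the multiplicative inverse of $f(x)^{-k}$ in the ring of formal Laurent series. The dual Riordan array $R^*(g,f)$ is the infinite matrix with entries $R^*(g,f)_{i,j}=D(g,f)_{-j,-i}$ for $i,j\ge0$ (the anti-transpose of the upper left quadrant of $D(g,f)$). *)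

theory Defs
  imports "HOL-Computational_Algebra.Formal_Laurent_Series"
begin

definition riordan :: "'a::field fps \<Rightarrow> 'a fps \<Rightarrow> nat \<Rightarrow> nat \<Rightarrow> 'a" where
  "riordan g f n k = fps_nth (g * f ^ k) n"

definition recmat :: "'a::field fps \<Rightarrow> 'a fps \<Rightarrow> int \<Rightarrow> int \<Rightarrow> 'a" where
  "recmat g f n k = fls_nth (fps_to_fls g * (fps_to_fls f) powi k) n"

definition dual_riordan :: "'a::field fps \<Rightarrow> 'a fps \<Rightarrow> nat \<Rightarrow> nat \<Rightarrow> 'a" where
  "dual_riordan g f i j = recmat g f (- int j) (- int i)"

text \<open>(1 + c x)^a as a formal power series, via the generalized binomial series.\<close>
definition binom_pow :: "real \<Rightarrow> real \<Rightarrow> real fps" where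
  "binom_pow c a = fps_compose (fps_binomial a) (fps_const c * fps_X)"

end

theory Submission
  imports Defs
begin

lemma binom_pow_nth: "binom_pow c a $ n = c ^ n * (a gchoose n)"
  unfolding binom_pow_def fps_compose_linear by simp

lemma binom_pow_add: "binom_pow c (a + b) = binom_pow c a * binom_pow c b"
  unfolding binom_pow_def fps_binomial_add_mult
  by (rule fps_compose_mult_distrib) simp

lemma binom_pow_0: "binom_pow c 0 = 1"
  by (simp add: binom_pow_def)

lemma binom_pow_1: "binom_pow c 1 = 1 + fps_const c * fps_X"
  by (simp add: binom_pow_def fps_binomial_1 fps_compose_add_distrib)

lemma binom_pow_nat: "binom_pow c (of_nat n) = (binom_pow c 1) ^ n"
  by (induction n) (simp_all add: binom_pow_0 binom_pow_add)

lemma binom_pow_neg1: "binom_pow c (-1) = inverse (1 + fps_const c * fps_X)"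
proof -
  have "binom_pow c (-1) * (1 + fps_const c * fps_X) = 1"
    using binom_pow_add[of c "-1" 1] by (simp add: binom_pow_0 binom_pow_1)
  moreover have "(1 + fps_const c * fps_X) $ 0 \<noteq> 0" by simp
  ultimately show ?thesis
    by (metis fps_inverse_unique mult.commute)
qed

lemma binom_pow_negnat: "binom_pow c (- of_nat n) = (binom_pow c (-1)) ^ n"
proof (induction n)
  case (Suc n)
  have "binom_pow c (- of_nat (Suc n)) = binom_pow c (-1) * binom_pow c (- of_nat n)"
    using binom_pow_add[of c "-1" "- of_nat n"] by (simp add: algebra_simps)
  thus ?case using Suc by simp
qed (simp add: binom_pow_0)

theorem theorem5:
  fixes p q :: int
  assumes "p \<ge> 2" and "0 < q" and "q < p"
  defines "g \<equiv> binom_pow (- (of_int p ^ 2)) (- (of_int q / of_int p))"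
      and "h \<equiv> binom_pow (- (of_int p ^ 2)) (- (of_int (p - q) / of_int p))"
      and "f \<equiv> - fps_X * inverse (1 - fps_const (of_int p ^ 2) * fps_X)"
  shows "\<forall>i j. dual_riordan g f i j = riordan h f i j"
proof (intro allI)
  fix i j :: nat
  define c :: real where "c = - (of_int p ^ 2)"
  define a :: real where "a = of_int q / of_int p"
  define B where "B = binom_pow c"
  have p0: "real_of_int p \<noteq> 0" using assms(1) by simp
  have ha: "- (of_int (p - q) / of_int p) = a - 1"
    using p0 unfolding a_def by (simp add: field_simps)
  have gB: "g = B (-a)" unfolding g_def B_def c_def a_def by simp
  have hB: "h = B (a - 1)" unfolding h_def B_def c_def ha by simp
  have u: "1 - fps_const (of_int p ^ 2) * fps_X = B 1"
  proof -
    have "B 1 = 1 + fps_const c * fps_X" unfolding B_def by (rule binom_pow_1)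
    also have "\<dots> = 1 - fps_const (of_int p ^ 2) * fps_X" by (simp add: c_def)
    finally show ?thesis by simp
  qed
  have m1: "(-1::real fps)^n = fps_const ((-1)^n)" for n
    by (induction n) (simp_all add: fps_const_mult[symmetric])
  have fB: "f = fps_X * (- B (-1))"
    unfolding f_def u B_def binom_pow_neg1 binom_pow_1 by simp
  have fj: "f ^ j = fps_X ^ j * (fps_const ((-1) ^ j) * B (- of_nat j))"
  proof -
    have "(- B (-1)) ^ j = fps_const ((-1) ^ j) * B (-1) ^ j"
      by (metis m1 power_minus)
    thus ?thesis unfolding fB power_mult_distrib B_def binom_pow_negnat by simp
  qed
  have "h * f ^ j = fps_X ^ j * (fps_const ((-1) ^ j) * B (a - 1 - of_nat j))"
    unfolding fj hB B_def by (simp add: binom_pow_add[symmetric] algebra_simps)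
  hence R: "riordan h f i j = (if i < j then 0 else (-1)^j * (c ^ (i - j) * ((a - 1 - of_nat j) gchoose (i - j))))"
    unfolding riordan_def by (simp add: fps_X_power_mult_nth B_def binom_pow_nth)
  define C where "C = fps_const ((-1) ^ i) * B (of_nat i)"
  have BB: "B (-1) * B 1 = 1"
    using binom_pow_add[of c "-1" 1] by (simp add: B_def binom_pow_0)
  have inv: "fps_to_fls (- B (-1)) powi (- int i) = fps_to_fls C"
  proof -
    have mi: "(- B (-1)) ^ i = fps_const ((-1) ^ i) * B (-1) ^ i"
      by (metis m1 power_minus)
    have ci: "fps_const ((-1::real) ^ i) * fps_const ((-1) ^ i) = 1"
      by (simp add: fps_const_mult[symmetric] power_mult_distrib[symmetric])
    have "(- B (-1)) ^ i * C = (fps_const ((-1::real) ^ i) * fps_const ((-1) ^ i)) * (B (-1) * B 1) ^ i"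
    proof -
      have Bi: "B (of_nat i) = B 1 ^ i" unfolding B_def by (rule binom_pow_nat)
      show ?thesis unfolding mi C_def Bi power_mult_distrib by (simp add: algebra_simps)
    qed
    also have "\<dots> = 1" unfolding ci BB by simp
    finally have "(- B (-1)) ^ i * C = 1" .
    hence "fps_to_fls (- B (-1)) ^ i * fps_to_fls C = 1"
      by (metis fls_times_fps_to_fls fps_to_fls_power fps_one_to_fls)
    thus ?thesis
      by (simp add: power_int_minus inverse_unique)
  qed
  have gC: "g * C = fps_const ((-1) ^ i) * B (of_nat i - a)"
    unfolding gB C_def B_def using binom_pow_add[of c "-a" "of_nat i"] by (simp add: algebra_simps)
  have "fps_to_fls g * fps_to_fls f powi (- int i)
        = fps_to_fls g * (fls_X_intpow (- int i) * fps_to_fls C)"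
    unfolding fB fls_times_fps_to_fls power_int_mult_distrib inv by simp
  also have "\<dots> = fls_shift (int i) (fps_to_fls (g * C))"
    by (simp only: fls_shifted_times_simps mult_1_left minus_minus fls_times_fps_to_fls)
  finally have E: "fps_to_fls g * fps_to_fls f powi (- int i) = fls_shift (int i) (fps_to_fls (g * C))" .
  have L: "dual_riordan g f i j = (if i < j then 0 else (-1)^i * (c ^ (i - j) * ((of_nat i - a) gchoose (i - j))))"
  proof (cases "i < j")
    case True thus ?thesis unfolding dual_riordan_def recmat_def E by simp
  next
    case False
    hence "nat (- int j + int i) = i - j" by simp
    thus ?thesis using False unfolding dual_riordan_def recmat_def E gC
      by (simp add: B_def binom_pow_nth)
  qed
  show "dual_riordan g f i j = riordan h f i j"
  proof (cases "i < j")
    case True thus ?thesis using L R by simp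
  next
    case False
    then obtain n where i: "i = j + n" by (metis le_add_diff_inverse not_less)
    have "((a - 1 - of_nat j) gchoose n) = (-1)^n * ((of_nat i - a) gchoose n)"
      by (subst gbinomial_negated_upper) (simp add: i algebra_simps)
    thus ?thesis using L R False by (simp add: i power_add)
  qed
qed

end
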